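(* Assume $\gamma\neq\pm2$. The brackets $\{\cdot,\cdot\}_{(1)}$ and $\{\cdot,\cdot\}_{(2)}$ below, on functions of $p_1,\dots,p_N,q_{12},q_{23},\dots,q_{N-1,N}$, are compatible: for every constant $w$, the bracket $\{\cdot,\cdot\}_w=\{\cdot,\cdot\}_{(1)}+w\,\{\cdot,\cdot\}_{(2)}$ is a Poisson bracket. Equivalently, for all functions $F,G,H$, $$\{\{F,G\}_{(2)},H\}_{(1)}+\{\{G,H\}_{(2)},F\}_{(1)}+\{\{H,F\}_{(2)},G\}_{(1)}+\{\{F,G\}_{(1)},H\}_{(2)}+\{\{G,H\}_{(1)},F\}_{(2)}+\{\{H,F\}_{(1)},G\}_{(2)}=0.$$
   Context: Fix $N\ge2$, $\nu\neq0$. Variables $p_1,\dots,p_N>0$, $q_1,\dots,q_N$ pairwise distinct with fixed ordering; $q_{ij}=q_i-q_j$, $\mathfrak s_{ij}=\mathrm{sgn}(q_i-q_j)$, $\mathfrak s_{ii}=0$. The first bracket is induced from the canonical one: $\{p_i,p_k\}_{(1)}=0$, $\{q_{ij},p_k\}_{(1)}=\delta_{ik}-\delta_{jk}$, $\{q_{ij},q_{kl}\}_{(1)}=0$. With $\mathcal Q_{ik}=(\gamma-2)e^{\nu|q_{ik}|}-(\gamma+2)e^{-\nu|q_{ik}|}+4$ and $\mathcal S_{ik}=(\gamma-2)e^{\nu|q_{ik}|}+(\gamma+2)e^{-\nu|q_{ik}|}$, the second bracket is: $\{p_i,p_k\}_{(2)}=\frac{\nu}{4}\mathfrak s_{ik}p_ip_k(\mathcal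 Q_{ik}-4)$, $\{q_{ij},p_k\}_{(2)}=-\frac14p_k(\mathcal S_{ik}-\mathcal S_{jk})$, $\{q_{ij},q_{kl}\}_{(2)}=-\frac{1}{4\nu}(\mathfrak s_{ik}\mathcal Q_{ik}-\mathfrak s_{jk}\mathcal Q_{jk}-\mathfrak s_{il}\mathcal Q_{il}+\mathfrak s_{jl}\mathcal Q_{jl})$. Both are extended to arbitrary smooth functions by the Leibniz rule. *)

theory Defs
  imports "HOL-Analysis.Analysis"
begin

text \<open>Phase space points z = (p, q) with p, q :: real^'n, where CARD('n) = N.
  Functions of p_1..p_N and the differences q_ij are represented as functions of (p,q)
  that are invariant under the translation q -> q + c(1,...,1).\<close>

type_synonym 'n phase = "(real^'n) \<times> (real^'n)"

definition phase_dom :: "'n::finite phase set" where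
  "phase_dom = {z. (\<forall>i. 0 < fst z $ i) \<and> (\<forall>i j. i \<noteq> j \<longrightarrow> snd z $ i \<noteq> snd z $ j)}"

definition transl_inv :: "('n::finite phase \<Rightarrow> real) \<Rightarrow> bool" where
  "transl_inv F \<longleftrightarrow> (\<forall>z\<in>phase_dom. \<forall>c::real. F (fst z, snd z + c *\<^sub>R (\<chi> i. 1)) = F z)"

definition dirderiv :: "'a::real_normed_vector \<Rightarrow> ('a \<Rightarrow> real) \<Rightarrow> 'a \<Rightarrow> real" where
  "dirderiv u F z = deriv (\<lambda>t. F (z + t *\<^sub>R u)) 0"

fun iter_dir :: "'a::real_normed_vector list \<Rightarrow> ('a \<Rightarrow> real) \<Rightarrow> 'a \<Rightarrow> real" where
  "iter_dir [] F = F"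
| "iter_dir (u # us) F = dirderiv u (iter_dir us F)"

definition smooth_on :: "'a::real_normed_vector set \<Rightarrow> ('a \<Rightarrow> real) \<Rightarrow> bool" where
  "smooth_on D F \<longleftrightarrow> (\<forall>us. continuous_on D (iter_dir us F) \<and>
      (\<forall>z\<in>D. \<forall>u. (\<lambda>t. iter_dir us F (z + t *\<^sub>R u)) differentiable (at 0)))"

definition dp :: "('n::finite phase \<Rightarrow> real) \<Rightarrow> 'n \<Rightarrow> 'n phase \<Rightarrow> real" where
  "dp F i = dirderiv (axis i 1, 0) F"

definition dq :: "('n::finite phase \<Rightarrow> real) \<Rightarrow> 'n \<Rightarrow> 'n phase \<Rightarrow> real" where
  "dq F i = dirderiv (0, axis i 1) F"

definition sQ :: "real \<Rightarrow> real \<Rightarrow> real \<Rightarrow> real" where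
  "sQ \<gamma> \<nu> x = (\<gamma> - 2) * exp (\<nu> * \<bar>x\<bar>) - (\<gamma> + 2) * exp (- \<nu> * \<bar>x\<bar>) + 4"

definition sS :: "real \<Rightarrow> real \<Rightarrow> real \<Rightarrow> real" where
  "sS \<gamma> \<nu> x = (\<gamma> - 2) * exp (\<nu> * \<bar>x\<bar>) + (\<gamma> + 2) * exp (- \<nu> * \<bar>x\<bar>)"

text \<open>First bracket (canonical, {q_i,p_k} = delta_ik, inducing {q_ij,p_k} = delta_ik - delta_jk),
  extended by the Leibniz rule.\<close>

definition br1 :: "('n::finite phase \<Rightarrow> real) \<Rightarrow> ('n phase \<Rightarrow> real) \<Rightarrow> 'n phase \<Rightarrow> real" where
  "br1 F G z = (\<Sum>i\<in>UNIV. dq F i z * dp G i z - dp F i z * dq G i z)"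

text \<open>Second bracket, via the lift {p_i,p_k} = PP, {q_i,p_k} = QP, {q_i,q_k} = QQ, which
  reproduces exactly the paper's brackets on p_k and on differences q_ij
  ({q_ij,p_k} = QP i k - QP j k, {q_ij,q_kl} = QQ i k - QQ j k - QQ i l + QQ j l);
  on translation-invariant functions the result does not depend on the lift.\<close>

definition PP :: "real \<Rightarrow> real \<Rightarrow> 'n::finite phase \<Rightarrow> 'n \<Rightarrow> 'n \<Rightarrow> real" where
  "PP \<gamma> \<nu> z i k = \<nu> / 4 * sgn (snd z $ i - snd z $ k) * (fst z $ i) * (fst z $ k)
      * (sQ \<gamma> \<nu> (snd z $ i - snd z $ k) - 4)"

definition QP :: "real \<Rightarrow> real \<Rightarrow> 'n::finite phase \<Rightarrow> 'n \<Rightarrow> 'n \<Rightarrow> real" where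
  "QP \<gamma> \<nu> z i k = - 1 / 4 * (fst z $ k) * sS \<gamma> \<nu> (snd z $ i - snd z $ k)"

definition QQ :: "real \<Rightarrow> real \<Rightarrow> 'n::finite phase \<Rightarrow> 'n \<Rightarrow> 'n \<Rightarrow> real" where
  "QQ \<gamma> \<nu> z i k = - 1 / (4 * \<nu>) * sgn (snd z $ i - snd z $ k) * sQ \<gamma> \<nu> (snd z $ i - snd z $ k)"

definition br2 :: "real \<Rightarrow> real \<Rightarrow> ('n::finite phase \<Rightarrow> real) \<Rightarrow> ('n phase \<Rightarrow> real) \<Rightarrow> 'n phase \<Rightarrow> real" where
  "br2 \<gamma> \<nu> F G z = (\<Sum>i\<in>UNIV. \<Sum>k\<in>UNIV.
       dp F i z * dp G k z * PP \<gamma> \<nu> z i k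
     + dq F i z * dp G k z * QP \<gamma> \<nu> z i k
     - dp F k z * dq G i z * QP \<gamma> \<nu> z i k
     + dq F i z * dq G k z * QQ \<gamma> \<nu> z i k)"

definition brw :: "real \<Rightarrow> real \<Rightarrow> real \<Rightarrow> ('n::finite phase \<Rightarrow> real) \<Rightarrow> ('n phase \<Rightarrow> real) \<Rightarrow> 'n phase \<Rightarrow> real" where
  "brw \<gamma> \<nu> w F G z = br1 F G z + w * br2 \<gamma> \<nu> F G z"

end

theory Submission
  imports Defs
begin


definition LD :: "'a::real_normed_vector set \<Rightarrow> ('a \<Rightarrow> real) \<Rightarrow> bool" where
  "LD D g \<longleftrightarrow> (\<forall>z\<in>D. \<forall>u. (\<lambda>t. g (z + t *\<^sub>R u)) differentiable (at 0))"

lemma smooth_LD: "smooth_on D F \<Longrightarrow> LD D (iter_dir us F)"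
  by (simp add: smooth_on_def LD_def)

lemma smooth_cont: "smooth_on D F \<Longrightarrow> continuous_on D (iter_dir us F)"
  by (simp add: smooth_on_def)

lemma HD_dirderiv: assumes "LD D g" "z \<in> D"
  shows "((\<lambda>t. g (z + t *\<^sub>R u)) has_real_derivative dirderiv u g z) (at 0)"
  using assms unfolding LD_def dirderiv_def
  by (simp add: DERIV_deriv_iff_real_differentiable)

lemma line_deriv: assumes "LD D g" "y + s *\<^sub>R v \<in> D"
  shows "((\<lambda>r. g (y + r *\<^sub>R v)) has_real_derivative dirderiv v g (y + s *\<^sub>R v)) (at s)"
proof -
  let ?w = "y + s *\<^sub>R v"
  have h: "((\<lambda>t. g (?w + t *\<^sub>R v)) has_real_derivative dirderiv v g ?w) (at (s + - s))"
    using HD_dirderiv[OF assms] by simp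
  have "((\<lambda>r. g (?w + (r + - s) *\<^sub>R v)) has_real_derivative dirderiv v g ?w) (at s)"
    using DERIV_shift[THEN iffD1, OF h] .
  moreover have "(\<lambda>r. g (?w + (r + - s) *\<^sub>R v)) = (\<lambda>r. g (y + r *\<^sub>R v))"
    by (rule ext) (simp add: algebra_simps)
  ultimately show ?thesis by simp
qed

lemma lem_s: assumes "LD D g" "y + s *\<^sub>R u + t *\<^sub>R v \<in> D"
  shows "((\<lambda>s. g (y + s *\<^sub>R u + t *\<^sub>R v)) has_real_derivative dirderiv u g (y + s *\<^sub>R u + t *\<^sub>R v)) (at s)"
proof -
  have e: "\<And>s. y + s *\<^sub>R u + t *\<^sub>R v = (y + t *\<^sub>R v) + s *\<^sub>R u" by (simp add: algebra_simps)
  show ?thesis unfolding e using line_deriv[OF assms(1), of "y + t *\<^sub>R v" s u] assms(2) e by simp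
qed

lemma lem_t: assumes "LD D g" "y + s *\<^sub>R u + t *\<^sub>R v \<in> D"
  shows "((\<lambda>t. g (y + s *\<^sub>R u + t *\<^sub>R v)) has_real_derivative dirderiv v g (y + s *\<^sub>R u + t *\<^sub>R v)) (at t)"
  using line_deriv[OF assms(1), of "y + s *\<^sub>R u" t v] assms(2) by simp

lemma schwarz:
  fixes F :: "'a::real_normed_vector \<Rightarrow> real"
  assumes D: "open D" and sm: "smooth_on D F" and y: "y \<in> D"
  shows "dirderiv v (dirderiv u F) y = dirderiv u (dirderiv v F) y"
proof (rule ccontr)
  assume ne: "dirderiv v (dirderiv u F) y \<noteq> dirderiv u (dirderiv v F) y"
  define A where "A = dirderiv v (dirderiv u F) y"
  define B where "B = dirderiv u (dirderiv v F) y"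
  define e where "e = \<bar>A - B\<bar> / 3"
  have e0: "e > 0" using ne by (simp add: e_def A_def B_def)
  have LD0: "LD D F" using smooth_LD[OF sm, of "[]"] by simp
  have LDu: "LD D (dirderiv u F)" using smooth_LD[OF sm, of "[u]"] by simp
  have LDv: "LD D (dirderiv v F)" using smooth_LD[OF sm, of "[v]"] by simp
  have c1: "isCont (dirderiv v (dirderiv u F)) y"
    using smooth_cont[OF sm, of "[v,u]"] D y by (simp add: continuous_on_eq_continuous_at)
  have c2: "isCont (dirderiv u (dirderiv v F)) y"
    using smooth_cont[OF sm, of "[u,v]"] D y by (simp add: continuous_on_eq_continuous_at)
  obtain d1 where d1: "d1 > 0" "\<And>x. dist x y < d1 \<Longrightarrow> dist (dirderiv v (dirderiv u F) x) A < e"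
    using c1 e0 unfolding continuous_at_eps_delta A_def by blast
  obtain d2 where d2: "d2 > 0" "\<And>x. dist x y < d2 \<Longrightarrow> dist (dirderiv u (dirderiv v F) x) B < e"
    using c2 e0 unfolding continuous_at_eps_delta B_def by blast
  obtain r where r: "r > 0" "ball y r \<subseteq> D" using D y open_contains_ball by blast
  define m where "m = min r (min d1 d2)"
  have m0: "m > 0" using r d1 d2 by (simp add: m_def)
  define M where "M = norm u + norm v + 1"
  have M0: "M > 0" unfolding M_def by (simp add: add_nonneg_pos)
  define h where "h = m / (2 * M)"
  have h0: "h > 0" using m0 M0 by (simp add: h_def)
  let ?P = "\<lambda>s t. y + s *\<^sub>R u + t *\<^sub>R v"
  have near: "dist (?P s t) y < m" if "0 \<le> s" "s \<le> h" "0 \<le> t" "t \<le> h" for s t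
  proof -
    have "dist (?P s t) y = norm (s *\<^sub>R u + t *\<^sub>R v)" by (simp add: dist_norm algebra_simps)
    also have "\<dots> \<le> norm (s *\<^sub>R u) + norm (t *\<^sub>R v)" by (rule norm_triangle_ineq)
    also have "\<dots> = s * norm u + t * norm v" using that by simp
    also have "\<dots> \<le> h * norm u + h * norm v"
      using that by (intro add_mono mult_right_mono) auto
    also have "\<dots> < h * M" using h0 by (simp add: M_def algebra_simps)
    also have "\<dots> = m / 2" using M0 by (simp add: h_def)
    also have "\<dots> < m" using m0 by simp
    finally show ?thesis .
  qed
  have inD: "?P s t \<in> D" if "0 \<le> s" "s \<le> h" "0 \<le> t" "t \<le> h" for s t
    using near[OF that] r(2) unfolding m_def by (auto simp: dist_commute subset_iff)
  have n1: "dist (?P s t) y < d1" if "0 \<le> s" "s \<le> h" "0 \<le> t" "t \<le> h" for s t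
    using near[OF that] unfolding m_def by linarith
  have n2: "dist (?P s t) y < d2" if "0 \<le> s" "s \<le> h" "0 \<le> t" "t \<le> h" for s t
    using near[OF that] unfolding m_def by linarith
  define Del where "Del = F (?P h h) - F (?P h 0) - F (?P 0 h) + F (?P 0 0)"
  obtain xi where xi: "0 < xi" "xi < h"
    "(F (?P h h) - F (?P h 0)) - (F (?P 0 h) - F (?P 0 0)) =
       (h - 0) * (dirderiv u F (?P xi h) - dirderiv u F (?P xi 0))"
  proof -
    have "\<exists>z. 0 < z \<and> z < h \<and> ((\<lambda>s. F (?P s h) - F (?P s 0)) h - (\<lambda>s. F (?P s h) - F (?P s 0)) 0
          = (h - 0) * (\<lambda>s. dirderiv u F (?P s h) - dirderiv u F (?P s 0)) z)"
      by (rule MVT2[OF h0]) (intro DERIV_diff lem_s[OF LD0] inD; use h0 in auto)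
    then show ?thesis using that by auto
  qed
  obtain eta where eta: "0 < eta" "eta < h"
    "dirderiv u F (?P xi h) - dirderiv u F (?P xi 0) = (h - 0) * dirderiv v (dirderiv u F) (?P xi eta)"
  proof -
    have "\<exists>z. 0 < z \<and> z < h \<and> ((\<lambda>t. dirderiv u F (?P xi t)) h - (\<lambda>t. dirderiv u F (?P xi t)) 0
          = (h - 0) * (\<lambda>t. dirderiv v (dirderiv u F) (?P xi t)) z)"
      by (rule MVT2[OF h0]) (intro lem_t[OF LDu] inD; use h0 xi in auto)
    then show ?thesis using that by auto
  qed
  obtain eta' where eta': "0 < eta'" "eta' < h"
    "(F (?P h h) - F (?P 0 h)) - (F (?P h 0) - F (?P 0 0)) =
       (h - 0) * (dirderiv v F (?P h eta') - dirderiv v F (?P 0 eta'))"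
  proof -
    have "\<exists>z. 0 < z \<and> z < h \<and> ((\<lambda>t. F (?P h t) - F (?P 0 t)) h - (\<lambda>t. F (?P h t) - F (?P 0 t)) 0
          = (h - 0) * (\<lambda>t. dirderiv v F (?P h t) - dirderiv v F (?P 0 t)) z)"
      by (rule MVT2[OF h0]) (intro DERIV_diff lem_t[OF LD0] inD; use h0 in auto)
    then show ?thesis using that by auto
  qed
  obtain xi' where xi': "0 < xi'" "xi' < h"
    "dirderiv v F (?P h eta') - dirderiv v F (?P 0 eta') = (h - 0) * dirderiv u (dirderiv v F) (?P xi' eta')"
  proof -
    have "\<exists>z. 0 < z \<and> z < h \<and> ((\<lambda>s. dirderiv v F (?P s eta')) h - (\<lambda>s. dirderiv v F (?P s eta')) 0
          = (h - 0) * (\<lambda>s. dirderiv u (dirderiv v F) (?P s eta')) z)"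
      by (rule MVT2[OF h0]) (intro lem_s[OF LDv] inD; use h0 eta' in auto)
    then show ?thesis using that by auto
  qed
  have "h * (h * dirderiv v (dirderiv u F) (?P xi eta)) = h * (h * dirderiv u (dirderiv v F) (?P xi' eta'))"
    using xi(3) eta(3) eta'(3) xi'(3) by (simp add: algebra_simps)
  then have eq: "dirderiv v (dirderiv u F) (?P xi eta) = dirderiv u (dirderiv v F) (?P xi' eta')"
    using h0 by simp
  have "dist (dirderiv v (dirderiv u F) (?P xi eta)) A < e"
    by (rule d1(2), rule n1) (use xi eta in auto)
  moreover have "dist (dirderiv u (dirderiv v F) (?P xi' eta')) B < e"
    by (rule d2(2), rule n2) (use xi' eta' in auto)
  ultimately have "\<bar>A - B\<bar> < 2 * e" using eq by (simp add: dist_real_def)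
  then show False using e0 by (simp add: e_def)
qed

lemma dirderiv_add:
  fixes F :: "'a::real_normed_vector \<Rightarrow> real"
  assumes D: "open D" and sm: "smooth_on D F" and y: "y \<in> D"
  shows "dirderiv (u + v) F y = dirderiv u F y + dirderiv v F y"
proof -
  have LD0: "LD D F" using smooth_LD[OF sm, of "[]"] by simp
  define L where "L = dirderiv (u + v) F y"
  define a where "a = dirderiv u F y"
  define b where "b = dirderiv v F y"
  let ?P = "\<lambda>s t. y + s *\<^sub>R u + t *\<^sub>R v"
  define g where "g = (\<lambda>t. F (y + t *\<^sub>R (u + v)) - F (y + t *\<^sub>R u))"
  have g0: "g 0 = 0" by (simp add: g_def)
  have "(g has_real_derivative L - a) (at 0)"
    unfolding g_def L_def a_def by (intro DERIV_diff HD_dirderiv[OF LD0 y])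
  then have "((\<lambda>t. (g (0 + t) - g 0) / t) \<longlongrightarrow> L - a) (at 0)"
    by (simp add: DERIV_def)
  then have lim1: "((\<lambda>t. (g (0 + t) - g 0) / t) \<longlongrightarrow> L - a) (at_right 0)"
    by (rule tendsto_mono[OF at_le, rotated]) simp
  have c: "isCont (dirderiv v F) y"
    using smooth_cont[OF sm, of "[v]"] D y by (simp add: continuous_on_eq_continuous_at)
  obtain r where r: "r > 0" "ball y r \<subseteq> D" using D y open_contains_ball by blast
  define M where "M = norm u + norm v + 1"
  have M0: "M > 0" unfolding M_def by (simp add: add_nonneg_pos)
  have near: "dist (?P s t) y < 2 * h * M" if "0 \<le> s" "s \<le> h" "0 \<le> t" "t \<le> h" "h > 0" for s t h
  proof -
    have "dist (?P s t) y = norm (s *\<^sub>R u + t *\<^sub>R v)" by (simp add: dist_norm algebra_simps)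
    also have "\<dots> \<le> norm (s *\<^sub>R u) + norm (t *\<^sub>R v)" by (rule norm_triangle_ineq)
    also have "\<dots> = s * norm u + t * norm v" using that by simp
    also have "\<dots> \<le> h * norm u + h * norm v"
      using that by (intro add_mono mult_right_mono) auto
    also have "\<dots> < 2 * h * M"
    proof -
      have "0 \<le> h * norm u" "0 \<le> h * norm v" using that by auto
      moreover have "2*h*M = (h*norm u + h*norm v) + (h*norm u + h*norm v + 2*h)"
        by (simp add: M_def algebra_simps)
      ultimately show ?thesis using that by linarith
    qed
    finally show ?thesis .
  qed
  have lim2: "((\<lambda>t. (g (0 + t) - g 0) / t) \<longlongrightarrow> b) (at_right 0)"
  proof (rule tendstoI)
    fix e :: real assume e: "e > 0"
    obtain d where d: "d > 0" "\<And>x. dist x y < d \<Longrightarrow> dist (dirderiv v F x) b < e"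
      using c e unfolding continuous_at_eps_delta b_def by blast
    define t0 where "t0 = min r d / (2 * M)"
    have t00: "t0 > 0" using r d M0 by (simp add: t0_def)
    show "\<forall>\<^sub>F t in at_right 0. dist ((g (0 + t) - g 0) / t) b < e"
      unfolding eventually_at_right_field
    proof (intro exI[of _ t0] conjI allI impI)
      show "0 < t0" by (rule t00)
      fix t :: real assume t: "0 < t" "t < t0"
      have nr: "dist (?P s s') y < min r d" if "0 \<le> s" "s \<le> t" "0 \<le> s'" "s' \<le> t" for s s'
      proof -
        have "dist (?P s s') y < 2 * t * M" by (rule near) (use that t in auto)
        also have "\<dots> < 2 * t0 * M" using t M0 by simp
        also have "\<dots> = min r d" using M0 by (simp add: t0_def)
        finally show ?thesis .
      qed
      have inD: "?P s s' \<in> D" if "0 \<le> s" "s \<le> t" "0 \<le> s'" "s' \<le> t" for s s'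
        using nr[OF that] r(2) by (auto simp: dist_commute subset_iff)
      obtain th where th: "0 < th" "th < t"
        "F (?P t t) - F (?P t 0) = (t - 0) * dirderiv v F (?P t th)"
      proof -
        have "\<exists>z. 0 < z \<and> z < t \<and> ((\<lambda>s'. F (?P t s')) t - (\<lambda>s'. F (?P t s')) 0
              = (t - 0) * (\<lambda>s'. dirderiv v F (?P t s')) z)"
          by (rule MVT2[OF t(1)]) (intro lem_t[OF LD0] inD; use t in auto)
        then show ?thesis using that by auto
      qed
      have "g t = F (?P t t) - F (?P t 0)"
        by (simp add: g_def algebra_simps)
      then have "(g (0 + t) - g 0) / t = dirderiv v F (?P t th)"
        using th(3) t(1) g0 by simp
      moreover have "dist (?P t th) y < d" using nr[of t th] th t by simp
      ultimately show "dist ((g (0 + t) - g 0) / t) b < e" using d(2) by simp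
    qed
  qed
  have "L - a = b" using tendsto_unique[OF trivial_limit_at_right_real lim1 lim2] .
  then show ?thesis unfolding L_def a_def b_def by simp
qed

lemma dirderiv_zero: "dirderiv 0 F y = 0"
  by (simp add: dirderiv_def)

lemma dirderiv_sum:
  fixes F :: "'a::real_normed_vector \<Rightarrow> real"
  assumes D: "open D" and sm: "smooth_on D F" and y: "y \<in> D" and A: "finite A"
  shows "dirderiv (\<Sum>i\<in>A. u i) F y = (\<Sum>i\<in>A. dirderiv (u i) F y)"
  using A
proof (induction A rule: finite_induct)
  case empty then show ?case by (simp add: dirderiv_zero)
next
  case (insert x A)
  then show ?case by (simp add: dirderiv_add[OF D sm y])
qed




type_synonym 'n crd = "bool \<times> 'n"

lemma sum_crd: "(\<Sum>a\<in>(UNIV::'n::finite crd set). f a) = (\<Sum>i\<in>UNIV. f (False, i)) + (\<Sum>i\<in>UNIV. f (True, i))"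
proof -
  have "(UNIV::'n crd set) = {False, True} \<times> UNIV" by auto
  then have "(\<Sum>a\<in>(UNIV::'n::finite crd set). f a) = (\<Sum>a\<in>{False, True} \<times> UNIV. f a)" by simp
  also have "\<dots> = (\<Sum>b\<in>{False, True}. \<Sum>i\<in>UNIV. f (b, i))"
    by (simp add: sum.cartesian_product)
  finally show ?thesis by simp
qed

definition ev :: "'n::finite crd \<Rightarrow> 'n phase" where
  "ev c = (if fst c then (0, axis (snd c) 1) else (axis (snd c) 1, 0))"

definition gr :: "('n::finite phase \<Rightarrow> real) \<Rightarrow> 'n phase \<Rightarrow> 'n crd \<Rightarrow> real" where
  "gr F z c = dirderiv (ev c) F z"

lemma gr_dp: "gr F z (False, i) = dp F i z" by (simp add: gr_def ev_def dp_def)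
lemma gr_dq: "gr F z (True, i) = dq F i z" by (simp add: gr_def ev_def dq_def)

definition Bk :: "('n::finite phase \<Rightarrow> 'n crd \<Rightarrow> 'n crd \<Rightarrow> real) \<Rightarrow> ('n phase \<Rightarrow> real) \<Rightarrow> ('n phase \<Rightarrow> real) \<Rightarrow> 'n phase \<Rightarrow> real" where
  "Bk P F G z = (\<Sum>a\<in>UNIV. \<Sum>b\<in>UNIV. P z a b * gr F z a * gr G z b)"

definition Pi1 :: "'n::finite phase \<Rightarrow> 'n crd \<Rightarrow> 'n crd \<Rightarrow> real" where
  "Pi1 z a b = (if snd a = snd b then (if fst a \<and> \<not> fst b then 1 else if \<not> fst a \<and> fst b then -1 else 0) else 0)"

definition Af :: "real \<Rightarrow> real \<Rightarrow> real \<Rightarrow> real" where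
  "Af g n x = g / 2 * sinh (n * x) - sgn x * cosh (n * x)"
definition Bf :: "real \<Rightarrow> real \<Rightarrow> real \<Rightarrow> real" where
  "Bf g n x = sgn x * sinh (n * x) - g / 2 * cosh (n * x)"
definition Cf :: "real \<Rightarrow> real \<Rightarrow> real \<Rightarrow> real" where
  "Cf g n x = - (Af g n x + sgn x)"

lemma Af_odd: "Af g n (- x) = - Af g n x" by (simp add: Af_def sgn_minus)
lemma Bf_even: "Bf g n (- x) = Bf g n x" by (simp add: Bf_def sgn_minus)
lemma Cf_odd: "Cf g n (- x) = - Cf g n x" by (simp add: Cf_def Af_def sgn_minus)

definition Pi2 :: "real \<Rightarrow> real \<Rightarrow> 'n::finite phase \<Rightarrow> 'n crd \<Rightarrow> 'n crd \<Rightarrow> real" where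
  "Pi2 g n z a b = (let x = snd z $ snd a - snd z $ snd b; pa = fst z $ snd a; pb = fst z $ snd b in
     if fst a then (if fst b then Cf g n x / n else pb * Bf g n x)
     else (if fst b then - pa * Bf g n x else n * pa * pb * Af g n x))"

lemma abs_sinh: "sinh ((n::real) * \<bar>x\<bar>) = sgn x * sinh (n * x)"
  by (cases "x > 0"; cases "x < 0") auto
lemma abs_cosh: "cosh ((n::real) * \<bar>x\<bar>) = cosh (n * x)"
  by (cases "x > 0"; cases "x < 0") auto
lemma exp_sc: "exp (y::real) = cosh y + sinh y" "exp (- y) = cosh y - sinh y"
  by (simp_all add: cosh_def sinh_def field_simps exp_minus)

lemma sQ_h: "sgn x * (sQ g n x - 4) = 4 * Af g n x"
proof -
  have "sQ g n x - 4 = (g - 2) * exp (n * \<bar>x\<bar>) - (g + 2) * exp (- (n * \<bar>x\<bar>))"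
    by (simp add: sQ_def)
  also have "\<dots> = 2 * g * sinh (n * \<bar>x\<bar>) - 4 * cosh (n * \<bar>x\<bar>)"
    by (simp add: exp_sc algebra_simps)
  finally show ?thesis
    by (cases "x > 0"; cases "x < 0") (auto simp: Af_def abs_sinh abs_cosh algebra_simps)
qed

lemma sS_h: "sS g n x = - 4 * Bf g n x"
proof -
  have "sS g n x = (g - 2) * exp (n * \<bar>x\<bar>) + (g + 2) * exp (- (n * \<bar>x\<bar>))"
    by (simp add: sS_def)
  also have "\<dots> = 2 * g * cosh (n * \<bar>x\<bar>) - 4 * sinh (n * \<bar>x\<bar>)"
    by (simp add: exp_sc algebra_simps)
  finally show ?thesis by (simp add: Bf_def abs_sinh abs_cosh algebra_simps)
qed

lemma sQ_h2: "sgn x * sQ g n x = 4 * Af g n x + 4 * sgn x"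
  using sQ_h[of x g n] by (simp add: algebra_simps)

lemma PP_h: "PP g n z i k = n * fst z $ i * fst z $ k * Af g n (snd z $ i - snd z $ k)"
  unfolding PP_def using sQ_h[of "snd z $ i - snd z $ k" g n] by (simp add: algebra_simps)
lemma QP_h: "QP g n z i k = fst z $ k * Bf g n (snd z $ i - snd z $ k)"
  unfolding QP_def by (simp add: sS_h)
lemma QQ_h: "n \<noteq> 0 \<Longrightarrow> QQ g n z i k = Cf g n (snd z $ i - snd z $ k) / n"
  unfolding QQ_def Cf_def using sQ_h2[of "snd z $ i - snd z $ k" g n]
  by (simp add: field_simps)

lemma if_times: "(if P then a else b) * (c::real) = (if P then a * c else b * c)" by simp

lemma Pi1_vals: "Pi1 z (False, i) (False, k) = 0" "Pi1 z (True, i) (True, k) = 0"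
  "Pi1 z (True, i) (False, k) = (if i = k then 1 else 0)"
  "Pi1 z (False, i) (True, k) = (if i = k then -1 else 0)"
  by (auto simp: Pi1_def)

lemma br1_Bk: "br1 F G = Bk Pi1 F G"
proof (rule ext)
  fix z
  show "br1 F G z = Bk Pi1 F G z"
    unfolding Bk_def br1_def
    by (simp add: sum_crd gr_dp gr_dq Pi1_vals if_times sum_subtractf sum_negf cong: if_cong)
qed

lemma Pi2_vals:
  "Pi2 g n z (False, i) (False, k) = PP g n z i k"
  "Pi2 g n z (True, i) (False, k) = QP g n z i k"
  "Pi2 g n z (False, i) (True, k) = - QP g n z k i"
  "n \<noteq> 0 \<Longrightarrow> Pi2 g n z (True, i) (True, k) = QQ g n z i k"
  using Bf_even[of g n "snd z $ i - snd z $ k"]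
  by (simp_all add: Pi2_def PP_h QP_h QQ_h)

lemma br2_Bk: assumes "n \<noteq> 0" shows "br2 g n F G = Bk (Pi2 g n) F G"
proof (rule ext)
  fix z
  have sw: "(\<Sum>i\<in>UNIV. \<Sum>k\<in>UNIV. dp F k z * dq G i z * QP g n z i k) =
            (\<Sum>i\<in>UNIV. \<Sum>k\<in>UNIV. QP g n z k i * dp F i z * dq G k z)"
    by (subst sum.swap) (simp add: algebra_simps)
  have sw2: "(\<Sum>i\<in>UNIV. \<Sum>ia\<in>UNIV. dp F i z * (dq G ia z * QP g n z ia i)) =
     (\<Sum>i\<in>UNIV. \<Sum>k\<in>UNIV. dp F k z * (dq G i z * QP g n z i k))"
    by (rule sum.swap)
  show "br2 g n F G z = Bk (Pi2 g n) F G z"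
    unfolding Bk_def br2_def
    by (simp add: sum_crd gr_dp gr_dq Pi2_vals assms sum.distrib sum_subtractf sum_negf algebra_simps sw2)
qed

lemma brw_Bk: assumes "n \<noteq> 0"
  shows "brw g n w F G = Bk (\<lambda>z a b. Pi1 z a b + w * Pi2 g n z a b) F G"
proof (rule ext)
  fix z
  show "brw g n w F G z = Bk (\<lambda>z a b. Pi1 z a b + w * Pi2 g n z a b) F G z"
    unfolding brw_def br1_Bk br2_Bk[OF assms] Bk_def
    by (simp add: algebra_simps sum.distrib sum_distrib_left)
qed




lemma sgn_line: assumes "d = 0 \<or> x0 \<noteq> 0" and "D = 0"
  shows "((\<lambda>t. sgn (x0 + t * d)) has_real_derivative D) (at (0::real))"
proof (cases "d = 0")
  case True then show ?thesis using assms by simp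
next
  case False
  then have x0: "x0 \<noteq> 0" using assms by auto
  have h1: "((\<lambda>t. sgn x0) has_real_derivative 0) (at 0)" by simp
  have r0: "(0::real) \<in> ball 0 (\<bar>x0\<bar> / \<bar>d\<bar>)" using False x0 by simp
  have h2: "sgn x0 = sgn (x0 + t * d)" if "t \<in> ball 0 (\<bar>x0\<bar> / \<bar>d\<bar>)" for t
  proof -
    have "\<bar>t\<bar> < \<bar>x0\<bar> / \<bar>d\<bar>" using that by simp
    then have "\<bar>t\<bar> * \<bar>d\<bar> < \<bar>x0\<bar>" using False by (simp add: field_simps)
    then have "\<bar>t * d\<bar> < \<bar>x0\<bar>" by (simp add: abs_mult)
    then show ?thesis using x0 by (cases "x0 > 0") (auto simp: sgn_if abs_if split: if_splits)
  qed
  show ?thesis unfolding assms(2)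
    by (rule has_field_derivative_transform_within_open[OF h1 open_ball r0 h2])
qed

lemma Af_line: assumes "d = 0 \<or> x0 \<noteq> 0" and "D = - n * d * Bf g n x0"
  shows "((\<lambda>t. Af g n (x0 + t * d)) has_real_derivative D) (at (0::real))"
  unfolding Af_def using assms
  by (auto intro!: derivative_eq_intros sgn_line simp: Bf_def algebra_simps)

lemma Bf_line: assumes "d = 0 \<or> x0 \<noteq> 0" and "D = - n * d * Af g n x0"
  shows "((\<lambda>t. Bf g n (x0 + t * d)) has_real_derivative D) (at (0::real))"
  unfolding Bf_def using assms
  by (auto intro!: derivative_eq_intros sgn_line simp: Af_def algebra_simps)

lemma Cf_line: assumes "d = 0 \<or> x0 \<noteq> 0" and "D = n * d * Bf g n x0"
  shows "((\<lambda>t. Cf g n (x0 + t * d)) has_real_derivative D) (at (0::real))"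
  unfolding Cf_def using assms
  by (auto intro!: derivative_eq_intros sgn_line Af_line)

definition Dp1 :: "real \<Rightarrow> real \<Rightarrow> 'n::finite phase \<Rightarrow> 'n crd \<Rightarrow> 'n crd \<Rightarrow> real" where
  "Dp1 g n z a b = (let x = snd z $ snd a - snd z $ snd b; pb = fst z $ snd b in
     if fst a then 0 else (if fst b then - Bf g n x else n * pb * Af g n x))"
definition Dp2 :: "real \<Rightarrow> real \<Rightarrow> 'n::finite phase \<Rightarrow> 'n crd \<Rightarrow> 'n crd \<Rightarrow> real" where
  "Dp2 g n z a b = (let x = snd z $ snd a - snd z $ snd b; pa = fst z $ snd a in
     if fst b then 0 else (if fst a then Bf g n x else n * pa * Af g n x))"
definition Dq :: "real \<Rightarrow> real \<Rightarrow> 'n::finite phase \<Rightarrow> 'n crd \<Rightarrow> 'n crd \<Rightarrow> real" where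
  "Dq g n z a b = (let x = snd z $ snd a - snd z $ snd b; pa = fst z $ snd a; pb = fst z $ snd b in
     if fst a then (if fst b then Bf g n x else - n * pb * Af g n x)
     else (if fst b then n * pa * Af g n x else - n * n * pa * pb * Bf g n x))"
definition dPi2 :: "real \<Rightarrow> real \<Rightarrow> 'n::finite phase \<Rightarrow> 'n phase \<Rightarrow> 'n crd \<Rightarrow> 'n crd \<Rightarrow> real" where
  "dPi2 g n z u a b = fst u $ snd a * Dp1 g n z a b + fst u $ snd b * Dp2 g n z a b
     + (snd u $ snd a - snd u $ snd b) * Dq g n z a b"

lemma HD_Pi2: assumes z: "z \<in> phase_dom" and n0: "n \<noteq> 0"
  shows "((\<lambda>t. Pi2 g n (z + t *\<^sub>R u) a b) has_real_derivative dPi2 g n z u a b) (at 0)"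
proof -
  define i where "i = snd a"
  define k where "k = snd b"
  define x0 where "x0 = snd z $ i - snd z $ k"
  define d where "d = snd u $ i - snd u $ k"
  have cond: "d = 0 \<or> x0 \<noteq> 0"
  proof (cases "i = k")
    case True then show ?thesis by (simp add: d_def)
  next
    case False then show ?thesis using z by (simp add: x0_def phase_dom_def)
  qed
  have ex: "\<And>t. snd (z + t *\<^sub>R u) $ i - snd (z + t *\<^sub>R u) $ k = x0 + t * d"
    by (simp add: x0_def d_def algebra_simps)
  have fn: "(\<lambda>t. Pi2 g n (z + t *\<^sub>R u) a b) = (\<lambda>t.
     if fst a then (if fst b then Cf g n (x0 + t * d) / n else (fst z $ k + t * fst u $ k) * Bf g n (x0 + t * d))
     else (if fst b then - (fst z $ i + t * fst u $ i) * Bf g n (x0 + t * d)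
       else n * (fst z $ i + t * fst u $ i) * (fst z $ k + t * fst u $ k) * Af g n (x0 + t * d)))"
    by (rule ext) (simp add: Pi2_def i_def k_def Let_def x0_def d_def algebra_simps)
  have x0e: "snd z $ snd a - snd z $ snd b = x0" by (simp add: x0_def i_def k_def)
  have de: "snd u $ snd a - snd u $ snd b = d" by (simp add: d_def i_def k_def)
  show ?thesis
    unfolding fn
    using cond
    by (cases "fst a"; cases "fst b")
       (auto intro!: derivative_eq_intros Af_line Bf_line Cf_line
         simp: dPi2_def Dp1_def Dp2_def Dq_def Let_def x0e de i_def[symmetric] k_def[symmetric] x0_def[symmetric] d_def[symmetric] n0 algebra_simps)
qed




lemma HD_Bk:
  assumes "\<And>a b. ((\<lambda>t. P (z + t *\<^sub>R u) a b) has_real_derivative dP a b) (at 0)"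
    "\<And>a. ((\<lambda>t. gr F (z + t *\<^sub>R u) a) has_real_derivative dF a) (at 0)"
    "\<And>b. ((\<lambda>t. gr G (z + t *\<^sub>R u) b) has_real_derivative dG b) (at 0)"
  shows "((\<lambda>t. Bk P F G (z + t *\<^sub>R u)) has_real_derivative
     (\<Sum>a\<in>UNIV. \<Sum>b\<in>UNIV. dP a b * gr F z a * gr G z b + P z a b * dF a * gr G z b + P z a b * gr F z a * dG b)) (at 0)"
  unfolding Bk_def
proof (intro DERIV_sum)
  fix a b
  have "((\<lambda>t. P (z + t *\<^sub>R u) a b * gr F (z + t *\<^sub>R u) a * gr G (z + t *\<^sub>R u) b) has_real_derivative
     (dP a b * gr F (z + 0 *\<^sub>R u) a + dF a * P (z + 0 *\<^sub>R u) a b) * gr G (z + 0 *\<^sub>R u) b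
       + dG b * (P (z + 0 *\<^sub>R u) a b * gr F (z + 0 *\<^sub>R u) a)) (at 0)"
    by (rule DERIV_mult[OF DERIV_mult[OF assms(1) assms(2)] assms(3)])
  then show "((\<lambda>t. P (z + t *\<^sub>R u) a b * gr F (z + t *\<^sub>R u) a * gr G (z + t *\<^sub>R u) b) has_real_derivative
     dP a b * gr F z a * gr G z b + P z a b * dF a * gr G z b + P z a b * gr F z a * dG b) (at 0)"
    by (simp add: algebra_simps)
qed

definition H2 :: "('n::finite phase \<Rightarrow> real) \<Rightarrow> 'n phase \<Rightarrow> 'n crd \<Rightarrow> 'n crd \<Rightarrow> real" where
  "H2 F z c a = dirderiv (ev c) (dirderiv (ev a) F) z"

lemma gr_fun: "(\<lambda>w. gr F w a) = dirderiv (ev a) F"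
  by (rule ext) (simp add: gr_def)

lemma HD_gr: assumes "smooth_on D F" "z \<in> D"
  shows "((\<lambda>t. gr F (z + t *\<^sub>R ev c) a) has_real_derivative H2 F z c a) (at 0)"
proof -
  have "LD D (dirderiv (ev a) F)" using smooth_LD[OF assms(1), of "[ev a]"] by simp
  from HD_dirderiv[OF this assms(2), of "ev c"] show ?thesis
    by (simp add: gr_def H2_def)
qed

lemma gr_Bk:
  assumes F: "smooth_on D F" and G: "smooth_on D G" and z: "z \<in> D"
    and HP: "\<And>a b. ((\<lambda>t. P (z + t *\<^sub>R ev c) a b) has_real_derivative dP a b) (at 0)"
  shows "gr (Bk P F G) z c = (\<Sum>a\<in>UNIV. \<Sum>b\<in>UNIV. dP a b * gr F z a * gr G z b
      + P z a b * H2 F z c a * gr G z b + P z a b * gr F z a * H2 G z c b)"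
proof -
  have e: "gr (Bk P F G) z c = deriv (\<lambda>t. Bk P F G (z + t *\<^sub>R ev c)) 0"
    by (simp add: gr_def dirderiv_def)
  show ?thesis unfolding e
    by (rule DERIV_imp_deriv[OF HD_Bk[OF HP HD_gr[OF F z] HD_gr[OF G z]]])
qed

lemma H2_sym: assumes "open D" "smooth_on D F" "z \<in> D"
  shows "H2 F z c a = H2 F z a c"
  unfolding H2_def using schwarz[OF assms] by simp

definition mv :: "('c::finite \<Rightarrow> 'c \<Rightarrow> real) \<Rightarrow> ('c \<Rightarrow> real) \<Rightarrow> 'c \<Rightarrow> real" where
  "mv P x c = (\<Sum>d\<in>UNIV. P c d * x d)"

definition BB :: "('c::finite \<Rightarrow> 'c \<Rightarrow> real) \<Rightarrow> ('c \<Rightarrow> real) \<Rightarrow> ('c \<Rightarrow> real) \<Rightarrow> real" where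
  "BB P u v = (\<Sum>c\<in>UNIV. \<Sum>d\<in>UNIV. P c d * u c * v d)"

definition DDv :: "('c::finite \<Rightarrow> 'c \<Rightarrow> real) \<Rightarrow> ('c \<Rightarrow> 'c \<Rightarrow> 'c \<Rightarrow> real) \<Rightarrow> ('c \<Rightarrow> real) \<Rightarrow> ('c \<Rightarrow> 'c \<Rightarrow> real)
   \<Rightarrow> ('c \<Rightarrow> real) \<Rightarrow> ('c \<Rightarrow> 'c \<Rightarrow> real) \<Rightarrow> 'c \<Rightarrow> real" where
  "DDv P dP f f2 g g2 c = (\<Sum>a\<in>UNIV. \<Sum>b\<in>UNIV. dP c a b * f a * g b + P a b * f2 c a * g b + P a b * f a * g2 c b)"

definition P1 :: "('c::finite \<Rightarrow> 'c \<Rightarrow> real) \<Rightarrow> ('c \<Rightarrow> 'c \<Rightarrow> 'c \<Rightarrow> real) \<Rightarrow> ('c \<Rightarrow> real) \<Rightarrow> ('c \<Rightarrow> real) \<Rightarrow> ('c \<Rightarrow> real) \<Rightarrow> real" where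
  "P1 P dR f g h = (\<Sum>c\<in>UNIV. mv P h c * (\<Sum>a\<in>UNIV. \<Sum>b\<in>UNIV. dR c a b * f a * g b))"

definition QF :: "('c::finite \<Rightarrow> 'c \<Rightarrow> real) \<Rightarrow> ('c \<Rightarrow> real) \<Rightarrow> ('c \<Rightarrow> real) \<Rightarrow> real" where
  "QF F2 x y = (\<Sum>c\<in>UNIV. \<Sum>a\<in>UNIV. F2 c a * x a * y c)"

lemma QF_sym: assumes "\<And>a c. K c a = K a c" shows "QF K x y = QF K y x"
  unfolding QF_def by (subst sum.swap) (simp add: assms algebra_simps)

lemma BB_mv: "BB P u v = (\<Sum>c\<in>UNIV. u c * mv P v c)"
  unfolding BB_def mv_def by (simp add: sum_distrib_left algebra_simps)

lemma DDv_split: assumes anti: "\<And>a b. R a b = - R b a"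
  shows "DDv R dR f f2 g g2 c = (\<Sum>a\<in>UNIV. \<Sum>b\<in>UNIV. dR c a b * f a * g b)
     + (\<Sum>a\<in>UNIV. f2 c a * mv R g a) - (\<Sum>a\<in>UNIV. g2 c a * mv R f a)"
proof -
  have 2: "(\<Sum>a\<in>UNIV. \<Sum>b\<in>UNIV. R a b * f2 c a * g b) = (\<Sum>a\<in>UNIV. f2 c a * mv R g a)"
    unfolding mv_def by (simp add: sum_distrib_left algebra_simps)
  have "(\<Sum>a\<in>UNIV. \<Sum>b\<in>UNIV. R a b * f a * g2 c b) = (\<Sum>b\<in>UNIV. \<Sum>a\<in>UNIV. R a b * f a * g2 c b)"
    by (rule sum.swap)
  also have "\<dots> = (\<Sum>b\<in>UNIV. \<Sum>a\<in>UNIV. - (g2 c b * (R b a * f a)))"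
    by (subst anti) (simp add: algebra_simps)
  also have "\<dots> = - (\<Sum>a\<in>UNIV. g2 c a * mv R f a)"
    unfolding mv_def by (simp add: sum_distrib_left sum_negf)
  finally have 3: "(\<Sum>a\<in>UNIV. \<Sum>b\<in>UNIV. R a b * f a * g2 c b) = - (\<Sum>a\<in>UNIV. g2 c a * mv R f a)" .
  show ?thesis unfolding DDv_def using 2 3 by (simp add: sum.distrib)
qed

lemma BB_DDv: assumes anti: "\<And>a b. R a b = - R b a"
  shows "BB P (DDv R dR f f2 g g2) h = P1 P dR f g h + QF f2 (mv R g) (mv P h) - QF g2 (mv R f) (mv P h)"
  unfolding BB_mv DDv_split[OF anti] P1_def QF_def
  by (simp add: sum_distrib_right sum_distrib_left sum.distrib sum_subtractf algebra_simps)

lemma jacobi_generic: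
  assumes aP: "\<And>a b. P a b = - P b a" and aR: "\<And>a b. R a b = - R b a"
    and sf: "\<And>a c. f2 c a = f2 a c" and sg: "\<And>a c. g2 c a = g2 a c" and sh: "\<And>a c. h2 c a = h2 a c"
  shows "BB P (DDv R dR f f2 g g2) h + BB P (DDv R dR g g2 h h2) f + BB P (DDv R dR h h2 f f2) g
       + BB R (DDv P dP f f2 g g2) h + BB R (DDv P dP g g2 h h2) f + BB R (DDv P dP h h2 f f2) g
     = P1 P dR f g h + P1 P dR g h f + P1 P dR h f g + P1 R dP f g h + P1 R dP g h f + P1 R dP h f g"
  unfolding BB_DDv[OF aR] BB_DDv[OF aP]
  using QF_sym[where K=f2 and x="mv R g" and y="mv P h", OF sf] QF_sym[where K=f2 and x="mv R h" and y="mv P g", OF sf]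
    QF_sym[where K=g2 and x="mv R h" and y="mv P f", OF sg] QF_sym[where K=g2 and x="mv R f" and y="mv P h", OF sg]
    QF_sym[where K=h2 and x="mv R f" and y="mv P g", OF sh] QF_sym[where K=h2 and x="mv R g" and y="mv P f", OF sh]
  by linarith




lemma ev_fst: "fst (ev c) $ i = (if c = (False, i) then 1 else 0)"
  by (cases c) (auto simp: ev_def axis_def)
lemma ev_snd: "snd (ev c) $ i = (if c = (True, i) then 1 else 0)"
  by (cases c) (auto simp: ev_def axis_def)

lemma times_if: "(x::real) * (if P then y else 0) = (if P then x * y else 0)" by simp

lemma coll: "(\<Sum>c\<in>UNIV. phi c * dPi2 g n z (ev c) a b) =
   phi (False, snd a) * Dp1 g n z a b + phi (False, snd b) * Dp2 g n z a b
   + (phi (True, snd a) - phi (True, snd b)) * Dq g n z a b"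
  unfolding dPi2_def ev_fst ev_snd
  by (simp add: algebra_simps sum.distrib sum_subtractf times_if cong: if_cong)

definition Xc :: "real \<Rightarrow> real \<Rightarrow> 'n::finite phase \<Rightarrow> ('n crd \<Rightarrow> 'n crd \<Rightarrow> real) \<Rightarrow> 'n crd \<Rightarrow> 'n crd \<Rightarrow> 'n crd \<Rightarrow> real" where
  "Xc g n z P a b d = P (False, snd a) d * Dp1 g n z a b + P (False, snd b) d * Dp2 g n z a b
     + (P (True, snd a) d - P (True, snd b) d) * Dq g n z a b"

definition T3 :: "('c::finite \<Rightarrow> 'c \<Rightarrow> 'c \<Rightarrow> real) \<Rightarrow> ('c \<Rightarrow> real) \<Rightarrow> ('c \<Rightarrow> real) \<Rightarrow> ('c \<Rightarrow> real) \<Rightarrow> real" where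
  "T3 X f g h = (\<Sum>a\<in>UNIV. \<Sum>b\<in>UNIV. \<Sum>d\<in>UNIV. X a b d * f a * g b * h d)"

lemma rot3: "(\<Sum>a\<in>UNIV. \<Sum>b\<in>UNIV. \<Sum>d\<in>UNIV. Y a b d) = (\<Sum>d\<in>UNIV. \<Sum>a\<in>UNIV. \<Sum>b\<in>UNIV. (Y a b d :: real))"
proof -
  have "(\<Sum>a\<in>UNIV. \<Sum>b\<in>UNIV. \<Sum>d\<in>UNIV. Y a b d) = (\<Sum>a\<in>UNIV. \<Sum>d\<in>UNIV. \<Sum>b\<in>UNIV. Y a b d)"
    by (rule sum.cong[OF refl], rule sum.swap)
  also have "\<dots> = (\<Sum>d\<in>UNIV. \<Sum>a\<in>UNIV. \<Sum>b\<in>UNIV. Y a b d)"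
    by (rule sum.swap)
  finally show ?thesis .
qed

lemma P1_Xc: "P1 P (\<lambda>c a b. dPi2 gm nu z (ev c) a b) f g h = T3 (Xc gm nu z P) f g h"
proof -
  have "P1 P (\<lambda>c a b. dPi2 gm nu z (ev c) a b) f g h =
     (\<Sum>c\<in>UNIV. \<Sum>a\<in>UNIV. \<Sum>b\<in>UNIV. f a * g b * (mv P h c * dPi2 gm nu z (ev c) a b))"
    unfolding P1_def by (simp add: sum_distrib_left algebra_simps)
  also have "\<dots> = (\<Sum>a\<in>UNIV. \<Sum>b\<in>UNIV. \<Sum>c\<in>UNIV. f a * g b * (mv P h c * dPi2 gm nu z (ev c) a b))"
    by (rule rot3[symmetric])
  also have "\<dots> = (\<Sum>a\<in>UNIV. \<Sum>b\<in>UNIV. f a * g b * (\<Sum>c\<in>UNIV. mv P h c * dPi2 gm nu z (ev c) a b))"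
    by (simp add: sum_distrib_left)
  also have "\<dots> = T3 (Xc gm nu z P) f g h"
    unfolding coll T3_def Xc_def mv_def
    by (simp add: sum_distrib_left sum_distrib_right algebra_simps sum.distrib sum_subtractf)
  finally show ?thesis .
qed

lemma T3_rot: "T3 X g h f = T3 (\<lambda>a b d. X b d a) f g h"
  unfolding T3_def by (subst rot3) (simp add: algebra_simps)

lemma T3_add: "T3 A f g h + T3 B f g h + T3 C f g h = T3 (\<lambda>a b d. A a b d + B a b d + C a b d) f g h"
  unfolding T3_def by (simp add: algebra_simps sum.distrib)

lemma T3_cyc: "T3 X f g h + T3 X g h f + T3 X h f g = T3 (\<lambda>a b d. X a b d + X b d a + X d a b) f g h"
proof -
  have 1: "T3 X g h f = T3 (\<lambda>a b d. X b d a) f g h" by (rule T3_rot)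
  have "T3 X h f g = T3 (\<lambda>a b d. X b d a) g h f" by (rule T3_rot)
  also have "\<dots> = T3 (\<lambda>a b d. X d a b) f g h" by (rule T3_rot)
  finally show ?thesis using 1 T3_add by simp
qed



lemma sinh_e2: "sinh (x::real) = (exp x - exp (- x)) / 2"
  by (simp add: sinh_def)
lemma cosh_e2: "cosh (x::real) = (exp x + exp (- x)) / 2"
  by (simp add: cosh_def)

lemma K2d: "(Cf g n (d1 + d2) - Cf g n d2) * Af g n d1 + (Bf g n d1 - Bf g n (d1 + d2)) * Bf g n d2
    - (Cf g n d2 + Cf g n d1) * Af g n (d1 + d2) = (1 - g^2/4) * (cosh (n * d1) - cosh (n * (d1 + d2)))"
proof -
  define X where "X = exp (n * d1)"
  define Y where "Y = exp (n * d2)"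
  define X' where "X' = exp (- (n * d1))"
  define Y' where "Y' = exp (- (n * d2))"
  have r: "X * X' = 1" "Y * Y' = 1" by (simp_all add: X_def X'_def Y_def Y'_def flip: exp_add)
  have z: "d1 = 0 \<longrightarrow> X = 1 \<and> X' = 1" "d2 = 0 \<longrightarrow> Y = 1 \<and> Y' = 1"
    by (simp_all add: X_def Y_def X'_def Y'_def)
  have e: "exp (n * (d1 + d2)) = X * Y" "exp (- (n * (d1 + d2))) = X' * Y'"
    by (simp_all add: X_def Y_def X'_def Y'_def distrib_left flip: exp_add)
  show ?thesis
    unfolding Cf_def Af_def Bf_def sinh_e2 cosh_e2 e X_def[symmetric] Y_def[symmetric] X'_def[symmetric] Y'_def[symmetric]
    using z
    by (cases d1 "0::real" rule: linorder_cases; cases d2 "0::real" rule: linorder_cases;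
        cases "d1 + d2" "0::real" rule: linorder_cases;
        simp add: sgn_if field_simps power2_eq_square; use r in algebra)
qed

lemma K3d: "(Cf g n (d1 + d2) - Cf g n d2) * Bf g n d1 + (Cf g n (d1 + d2) - Cf g n d1) * Bf g n d2
    - (Cf g n d2 + Cf g n d1) * Bf g n (d1 + d2)
    = (g^2/4 - 1) * (sinh (n * d1) + sinh (n * d2) - sinh (n * (d1 + d2)))"
proof -
  define X where "X = exp (n * d1)"
  define Y where "Y = exp (n * d2)"
  define X' where "X' = exp (- (n * d1))"
  define Y' where "Y' = exp (- (n * d2))"
  have r: "X * X' = 1" "Y * Y' = 1" by (simp_all add: X_def X'_def Y_def Y'_def flip: exp_add)
  have z: "d1 = 0 \<longrightarrow> X = 1 \<and> X' = 1" "d2 = 0 \<longrightarrow> Y = 1 \<and> Y' = 1"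
    by (simp_all add: X_def Y_def X'_def Y'_def)
  have e: "exp (n * (d1 + d2)) = X * Y" "exp (- (n * (d1 + d2))) = X' * Y'"
    by (simp_all add: X_def Y_def X'_def Y'_def distrib_left flip: exp_add)
  show ?thesis
    unfolding Cf_def Af_def Bf_def sinh_e2 cosh_e2 e X_def[symmetric] Y_def[symmetric] X'_def[symmetric] Y'_def[symmetric]
    using z
    by (cases d1 "0::real" rule: linorder_cases; cases d2 "0::real" rule: linorder_cases;
        cases "d1 + d2" "0::real" rule: linorder_cases;
        simp add: sgn_if field_simps power2_eq_square; use r in algebra)
qed

lemma K1d: "Bf g n d1 * (sgn (d1 + d2) - sgn d2) + Bf g n d2 * Af g n (d1 + d2) - Bf g n (d1 + d2) * Af g n d2
   = (1 - g^2/4) * sinh (n * d1)"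
proof -
  define X where "X = exp (n * d1)"
  define Y where "Y = exp (n * d2)"
  define X' where "X' = exp (- (n * d1))"
  define Y' where "Y' = exp (- (n * d2))"
  have r: "X * X' = 1" "Y * Y' = 1" by (simp_all add: X_def X'_def Y_def Y'_def flip: exp_add)
  have z: "d1 = 0 \<longrightarrow> X = 1 \<and> X' = 1" "d2 = 0 \<longrightarrow> Y = 1 \<and> Y' = 1"
    by (simp_all add: X_def Y_def X'_def Y'_def)
  have e: "exp (n * (d1 + d2)) = X * Y" "exp (- (n * (d1 + d2))) = X' * Y'"
    by (simp_all add: X_def Y_def X'_def Y'_def distrib_left flip: exp_add)
  show ?thesis
    unfolding Cf_def Af_def Bf_def sinh_e2 cosh_e2 e X_def[symmetric] Y_def[symmetric] X'_def[symmetric] Y'_def[symmetric]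
    using z
    by (cases d1 "0::real" rule: linorder_cases; cases d2 "0::real" rule: linorder_cases;
        cases "d1 + d2" "0::real" rule: linorder_cases;
        simp add: sgn_if field_simps power2_eq_square; use r in algebra)
qed



definition Jc :: "real \<Rightarrow> real \<Rightarrow> 'n::finite phase \<Rightarrow> ('n crd \<Rightarrow> 'n crd \<Rightarrow> real) \<Rightarrow> 'n crd \<Rightarrow> 'n crd \<Rightarrow> 'n crd \<Rightarrow> real" where
  "Jc g n z P a b d = Xc g n z P a b d + Xc g n z P b d a + Xc g n z P d a b"

lemma odd3: fixes u v :: real shows
  "Af g n (v - u) = - Af g n (u - v)" "Bf g n (v - u) = Bf g n (u - v)" "Cf g n (v - u) = - Cf g n (u - v)"
  "sgn (v - u) = - sgn (u - v)"
  using Af_odd[of g n "u - v"] Bf_even[of g n "u - v"] Cf_odd[of g n "u - v"] sgn_minus[of "u - v"]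
  by simp_all

lemma fval0: "Af g n 0 = 0" "Bf g n 0 = - g / 2" "Cf g n 0 = 0"
  by (simp_all add: Af_def Bf_def Cf_def)

lemma J_FFT: assumes n0: "n \<noteq> 0"
  shows "Jc g n z (Pi2 g n z) (False, i) (False, j) (True, k) =
    n * (1 - g^2/4) * fst z $ i * fst z $ j * sinh (n * (snd z $ i - snd z $ j))"
proof -
  define u v w where "u = snd z $ i" and "v = snd z $ j" and "w = snd z $ k"
  have k: "Bf g n (u - v) * (sgn (u - w) - sgn (v - w)) + Bf g n (v - w) * Af g n (u - w) - Bf g n (u - w) * Af g n (v - w)
   = (1 - g^2/4) * sinh (n * (u - v))"
    using K1d[of g n "u - v" "v - w"] by simp
  have ni: "n * inverse n = 1" using n0 by simp
  show ?thesis
    unfolding Jc_def Xc_def Pi2_def Dp1_def Dp2_def Dq_def Let_def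
    unfolding u_def[symmetric] v_def[symmetric] w_def[symmetric]
    using n0 k
    apply (simp add: u_def[symmetric] v_def[symmetric] w_def[symmetric] odd3[where u=u and v=v] odd3[where u=u and v=w] odd3[where u=v and v=w] fval0 Cf_def field_simps)
    using k by algebra
qed

lemma J_FTT: assumes n0: "n \<noteq> 0"
  shows "Jc g n z (Pi2 g n z) (False, i) (True, j) (True, k) =
    (1 - g^2/4) * fst z $ i * (cosh (n * (snd z $ i - snd z $ j)) - cosh (n * (snd z $ i - snd z $ k)))"
proof -
  define u v w where "u = snd z $ i" and "v = snd z $ j" and "w = snd z $ k"
  have k: "(Cf g n (u - w) - Cf g n (v - w)) * Af g n (u - v) + (Bf g n (u - v) - Bf g n (u - w)) * Bf g n (v - w)
    - (Cf g n (v - w) + Cf g n (u - v)) * Af g n (u - w) = (1 - g^2/4) * (cosh (n * (u - v)) - cosh (n * (u - w)))"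
    using K2d[of g n "u - v" "v - w"] by simp
  show ?thesis
    unfolding Jc_def Xc_def Pi2_def Dp1_def Dp2_def Dq_def Let_def
    using n0 k
    apply (simp add: u_def[symmetric] v_def[symmetric] w_def[symmetric] odd3[where u=u and v=v] odd3[where u=u and v=w] odd3[where u=v and v=w] fval0 field_simps)
    using k by algebra
qed

lemma J_TTT: assumes n0: "n \<noteq> 0"
  shows "Jc g n z (Pi2 g n z) (True, i) (True, j) (True, k) =
    (g^2/4 - 1) / n * (sinh (n * (snd z $ i - snd z $ j)) + sinh (n * (snd z $ j - snd z $ k)) - sinh (n * (snd z $ i - snd z $ k)))"
proof -
  define u v w where "u = snd z $ i" and "v = snd z $ j" and "w = snd z $ k"
  have k: "(Cf g n (u - w) - Cf g n (v - w)) * Bf g n (u - v) + (Cf g n (u - w) - Cf g n (u - v)) * Bf g n (v - w)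
    - (Cf g n (v - w) + Cf g n (u - v)) * Bf g n (u - w)
    = (g^2/4 - 1) * (sinh (n * (u - v)) + sinh (n * (v - w)) - sinh (n * (u - w)))"
    using K3d[of g n "u - v" "v - w"] by simp
  show ?thesis
    unfolding Jc_def Xc_def Pi2_def Dp1_def Dp2_def Dq_def Let_def
    using n0 k
    apply (simp add: u_def[symmetric] v_def[symmetric] w_def[symmetric] odd3[where u=u and v=v] odd3[where u=u and v=w] odd3[where u=v and v=w] fval0 field_simps)
    using k by algebra
qed

lemma J_FFF: assumes n0: "n \<noteq> 0"
  shows "Jc g n z (Pi2 g n z) (False, i) (False, j) (False, k) = 0"
proof -
  define u v w where "u = snd z $ i" and "v = snd z $ j" and "w = snd z $ k"
  show ?thesis
    unfolding Jc_def Xc_def Pi2_def Dp1_def Dp2_def Dq_def Let_def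
    using n0
    by (simp add: u_def[symmetric] v_def[symmetric] w_def[symmetric] odd3[where u=u and v=v] odd3[where u=u and v=w] odd3[where u=v and v=w] fval0 field_simps)
qed

lemma J_mixed: "Jc g n z (Pi1 z) a b d = 0"
proof -
  obtain ta i where a: "a = (ta, i)" by (cases a)
  obtain tb j where b: "b = (tb, j)" by (cases b)
  obtain td k where d: "d = (td, k)" by (cases d)
  define u v w where "u = snd z $ i" and "v = snd z $ j" and "w = snd z $ k"
  show ?thesis
    unfolding a b d Jc_def Xc_def Pi1_def Dp1_def Dp2_def Dq_def Let_def
    by (cases ta; cases tb; cases td; cases "i = j"; cases "j = k"; cases "i = k";
        simp add: u_def[symmetric] v_def[symmetric] w_def[symmetric] odd3[where u=u and v=v] odd3[where u=u and v=w] odd3[where u=v and v=w] fval0 algebra_simps)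
qed



lemma Jc_rot: "Jc g n z P a b d = Jc g n z P b d a"
  unfolding Jc_def by simp

lemma z3: "(\<Sum>k\<in>UNIV. h k) = 0 \<Longrightarrow> (\<Sum>i\<in>UNIV. \<Sum>j\<in>UNIV. \<Sum>k\<in>UNIV. A i j * h k) = (0::real)"
  by (simp add: sum_distrib_left[symmetric])
lemma z2: "(\<Sum>j\<in>UNIV. g j) = 0 \<Longrightarrow> (\<Sum>i\<in>UNIV. \<Sum>j\<in>UNIV. \<Sum>k\<in>UNIV. A i k * g j) = (0::real)"
proof -
  assume g: "(\<Sum>j\<in>UNIV. g j) = 0"
  have "(\<Sum>i\<in>UNIV. \<Sum>j\<in>UNIV. \<Sum>k\<in>UNIV. A i k * g j) = (\<Sum>i\<in>UNIV. \<Sum>k\<in>UNIV. \<Sum>j\<in>UNIV. A i k * g j)"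
    by (rule sum.cong[OF refl], rule sum.swap)
  also have "\<dots> = 0" using g by (simp add: sum_distrib_left[symmetric])
  finally show ?thesis .
qed
lemma z1: "(\<Sum>i\<in>UNIV. f i) = 0 \<Longrightarrow> (\<Sum>i\<in>UNIV. \<Sum>j\<in>UNIV. \<Sum>k\<in>UNIV. A j k * f i) = (0::real)"
proof -
  assume f: "(\<Sum>i\<in>UNIV. f i) = 0"
  have "(\<Sum>i\<in>UNIV. \<Sum>j\<in>UNIV. \<Sum>k\<in>UNIV. A j k * f i) = (\<Sum>i\<in>UNIV. f i * (\<Sum>j\<in>UNIV. \<Sum>k\<in>UNIV. A j k))"
    by (simp add: sum_distrib_left algebra_simps)
  also have "\<dots> = (\<Sum>i\<in>UNIV. f i) * (\<Sum>j\<in>UNIV. \<Sum>k\<in>UNIV. A j k)"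
    by (simp add: sum_distrib_right)
  also have "\<dots> = 0" by (simp only: f)
  finally show ?thesis .
qed

context
  fixes gm nu :: real and z :: "'n::finite phase" and f g h :: "'n crd \<Rightarrow> real"
  assumes n0: "nu \<noteq> 0"
    and af: "(\<Sum>i\<in>UNIV. f (True, i)) = 0" and ag: "(\<Sum>i\<in>UNIV. g (True, i)) = 0"
    and ah: "(\<Sum>i\<in>UNIV. h (True, i)) = 0"
begin

abbreviation "JJ a b d \<equiv> Jc gm nu z (Pi2 gm nu z) a b d"

lemma B_FFF: "(\<Sum>i\<in>UNIV. \<Sum>j\<in>UNIV. \<Sum>k\<in>UNIV. JJ (False, i) (False, j) (False, k) * f (False, i) * g (False, j) * h (False, k)) = 0"
  by (simp add: J_FFF[OF n0])

lemma B_FFT: "(\<Sum>i\<in>UNIV. \<Sum>j\<in>UNIV. \<Sum>k\<in>UNIV. JJ (False, i) (False, j) (True, k) * f (False, i) * g (False, j) * h (True, k)) = 0"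
  using z3[OF ah, of "\<lambda>i j. nu * (1 - gm^2/4) * fst z $ i * fst z $ j * sinh (nu * (snd z $ i - snd z $ j)) * f (False, i) * g (False, j)"]
  by (simp add: J_FFT[OF n0])

lemma B_FTF: "(\<Sum>i\<in>UNIV. \<Sum>j\<in>UNIV. \<Sum>k\<in>UNIV. JJ (False, i) (True, j) (False, k) * f (False, i) * g (True, j) * h (False, k)) = 0"
proof -
  have e: "JJ (False, i) (True, j) (False, k) = JJ (False, k) (False, i) (True, j)" for i j k
    using Jc_rot[of gm nu z "Pi2 gm nu z" "(False, k)" "(False, i)" "(True, j)"] by simp
  show ?thesis
    using z2[OF ag, of "\<lambda>i k. nu * (1 - gm^2/4) * fst z $ k * fst z $ i * sinh (nu * (snd z $ k - snd z $ i)) * f (False, i) * h (False, k)"]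
    by (simp add: e J_FFT[OF n0] algebra_simps)
qed

lemma B_TFF: "(\<Sum>i\<in>UNIV. \<Sum>j\<in>UNIV. \<Sum>k\<in>UNIV. JJ (True, i) (False, j) (False, k) * f (True, i) * g (False, j) * h (False, k)) = 0"
proof -
  have e: "JJ (True, i) (False, j) (False, k) = JJ (False, j) (False, k) (True, i)" for i j k
    using Jc_rot[of gm nu z "Pi2 gm nu z" "(True, i)" "(False, j)" "(False, k)"] by simp
  show ?thesis
    using z1[OF af, of "\<lambda>j k. nu * (1 - gm^2/4) * fst z $ j * fst z $ k * sinh (nu * (snd z $ j - snd z $ k)) * g (False, j) * h (False, k)"]
    by (simp add: e J_FFT[OF n0] algebra_simps)
qed

lemma B_FTT: "(\<Sum>i\<in>UNIV. \<Sum>j\<in>UNIV. \<Sum>k\<in>UNIV. JJ (False, i) (True, j) (True, k) * f (False, i) * g (True, j) * h (True, k)) = 0"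
proof -
  have "(\<Sum>i\<in>UNIV. \<Sum>j\<in>UNIV. \<Sum>k\<in>UNIV. JJ (False, i) (True, j) (True, k) * f (False, i) * g (True, j) * h (True, k))
    = (\<Sum>i\<in>UNIV. \<Sum>j\<in>UNIV. \<Sum>k\<in>UNIV. ((1 - gm^2/4) * fst z $ i * cosh (nu * (snd z $ i - snd z $ j)) * f (False, i) * g (True, j)) * h (True, k))
    - (\<Sum>i\<in>UNIV. \<Sum>j\<in>UNIV. \<Sum>k\<in>UNIV. ((1 - gm^2/4) * fst z $ i * cosh (nu * (snd z $ i - snd z $ k)) * f (False, i) * h (True, k)) * g (True, j))"
    by (simp add: J_FTT[OF n0] sum_subtractf[symmetric] algebra_simps)
  also have "\<dots> = 0" by (simp only: z3[OF ah] z2[OF ag])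
  finally show ?thesis .
qed

lemma B_TFT: "(\<Sum>i\<in>UNIV. \<Sum>j\<in>UNIV. \<Sum>k\<in>UNIV. JJ (True, i) (False, j) (True, k) * f (True, i) * g (False, j) * h (True, k)) = 0"
proof -
  have e: "JJ (True, i) (False, j) (True, k) = JJ (False, j) (True, k) (True, i)" for i j k
    using Jc_rot[of gm nu z "Pi2 gm nu z" "(True, i)" "(False, j)" "(True, k)"] by simp
  have "(\<Sum>i\<in>UNIV. \<Sum>j\<in>UNIV. \<Sum>k\<in>UNIV. JJ (True, i) (False, j) (True, k) * f (True, i) * g (False, j) * h (True, k))
    = (\<Sum>i\<in>UNIV. \<Sum>j\<in>UNIV. \<Sum>k\<in>UNIV. ((1 - gm^2/4) * fst z $ j * cosh (nu * (snd z $ j - snd z $ k)) * g (False, j) * h (True, k)) * f (True, i))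
    - (\<Sum>i\<in>UNIV. \<Sum>j\<in>UNIV. \<Sum>k\<in>UNIV. ((1 - gm^2/4) * fst z $ j * cosh (nu * (snd z $ j - snd z $ i)) * g (False, j) * f (True, i)) * h (True, k))"
    by (simp add: e J_FTT[OF n0] sum_subtractf[symmetric] algebra_simps)
  also have "\<dots> = 0" by (simp only: z1[OF af] z3[OF ah])
  finally show ?thesis .
qed

lemma B_TTF: "(\<Sum>i\<in>UNIV. \<Sum>j\<in>UNIV. \<Sum>k\<in>UNIV. JJ (True, i) (True, j) (False, k) * f (True, i) * g (True, j) * h (False, k)) = 0"
proof -
  have e: "JJ (True, i) (True, j) (False, k) = JJ (False, k) (True, i) (True, j)" for i j k
    using Jc_rot[of gm nu z "Pi2 gm nu z" "(False, k)" "(True, i)" "(True, j)"] by simp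
  have "(\<Sum>i\<in>UNIV. \<Sum>j\<in>UNIV. \<Sum>k\<in>UNIV. JJ (True, i) (True, j) (False, k) * f (True, i) * g (True, j) * h (False, k))
    = (\<Sum>i\<in>UNIV. \<Sum>j\<in>UNIV. \<Sum>k\<in>UNIV. ((1 - gm^2/4) * fst z $ k * cosh (nu * (snd z $ k - snd z $ i)) * f (True, i) * h (False, k)) * g (True, j))
    - (\<Sum>i\<in>UNIV. \<Sum>j\<in>UNIV. \<Sum>k\<in>UNIV. ((1 - gm^2/4) * fst z $ k * cosh (nu * (snd z $ k - snd z $ j)) * g (True, j) * h (False, k)) * f (True, i))"
    by (simp add: e J_FTT[OF n0] sum_subtractf[symmetric] algebra_simps)
  also have "\<dots> = 0" by (simp only: z2[OF ag] z1[OF af])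
  finally show ?thesis .
qed

lemma B_TTT: "(\<Sum>i\<in>UNIV. \<Sum>j\<in>UNIV. \<Sum>k\<in>UNIV. JJ (True, i) (True, j) (True, k) * f (True, i) * g (True, j) * h (True, k)) = 0"
proof -
  have "(\<Sum>i\<in>UNIV. \<Sum>j\<in>UNIV. \<Sum>k\<in>UNIV. JJ (True, i) (True, j) (True, k) * f (True, i) * g (True, j) * h (True, k))
    = (\<Sum>i\<in>UNIV. \<Sum>j\<in>UNIV. \<Sum>k\<in>UNIV. ((gm^2/4 - 1) / nu * sinh (nu * (snd z $ i - snd z $ j)) * f (True, i) * g (True, j)) * h (True, k))
    + (\<Sum>i\<in>UNIV. \<Sum>j\<in>UNIV. \<Sum>k\<in>UNIV. ((gm^2/4 - 1) / nu * sinh (nu * (snd z $ j - snd z $ k)) * g (True, j) * h (True, k)) * f (True, i))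
    - (\<Sum>i\<in>UNIV. \<Sum>j\<in>UNIV. \<Sum>k\<in>UNIV. ((gm^2/4 - 1) / nu * sinh (nu * (snd z $ i - snd z $ k)) * f (True, i) * h (True, k)) * g (True, j))"
    by (simp add: J_TTT[OF n0] sum_subtractf[symmetric] sum.distrib[symmetric] algebra_simps)
  also have "\<dots> = 0" by (simp only: z3[OF ah] z1[OF af] z2[OF ag])
  finally show ?thesis .
qed

lemma T3_zero: "T3 (Jc gm nu z (Pi2 gm nu z)) f g h = 0"
  unfolding T3_def
  by (simp add: sum_crd sum.distrib B_FFF B_FFT B_FTF B_TFF B_FTT B_TFT B_TTF B_TTT)

end



lemma open_phase_dom: "open (phase_dom :: 'n::finite phase set)"
proof -
  have e: "(phase_dom :: 'n phase set) = (\<Inter>i\<in>UNIV. {z. 0 < fst z $ i}) \<inter>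
      (\<Inter>i\<in>UNIV. \<Inter>j\<in>UNIV. {z. i \<noteq> j \<longrightarrow> snd z $ i \<noteq> snd z $ j})"
    by (auto simp: phase_dom_def)
  have o1: "open {z::'n phase. 0 < fst z $ i}" for i
    by (rule open_Collect_less) (intro continuous_intros)+
  have o2: "open {z::'n phase. i \<noteq> j \<longrightarrow> snd z $ i \<noteq> snd z $ j}" for i j
  proof (cases "i = j")
    case True then show ?thesis by simp
  next
    case False
    have "open {z::'n phase. snd z $ i \<noteq> snd z $ j}"
      by (rule open_Collect_neq) (intro continuous_intros)+
    then show ?thesis using False by simp
  qed
  show ?thesis unfolding e
    by (intro open_Int open_INT ballI o1 o2; simp)
qed

lemma Pi1_anti: "Pi1 z a b = - Pi1 z b a"
  by (auto simp: Pi1_def)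

lemma Pi2_anti: "Pi2 g n z a b = - Pi2 g n z b a"
  using odd3[where u="snd z $ snd a" and v="snd z $ snd b"]
  by (cases "fst a"; cases "fst b") (auto simp: Pi2_def Let_def)

lemma annih:
  fixes F :: "'n::finite phase \<Rightarrow> real"
  assumes sm: "smooth_on phase_dom F" and ti: "transl_inv F" and z: "z \<in> phase_dom"
  shows "(\<Sum>i\<in>UNIV. gr F z (True, i)) = 0"
proof -
  have s1: "(\<Sum>i\<in>UNIV. ev (True, i)) = ((0::real^'n), ((\<chi> i. 1) :: real^'n))"
  proof -
    have "(\<Sum>i\<in>UNIV. axis i (1::real)) = ((\<chi> i. 1) :: real^'n)"
      by (simp add: vec_eq_iff sum_component axis_def)
    then show ?thesis by (simp add: ev_def prod_eq_iff fst_sum snd_sum)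
  qed
  have "(\<Sum>i\<in>UNIV. gr F z (True, i)) = dirderiv (\<Sum>i\<in>UNIV. ev (True, i)) F z"
    unfolding gr_def by (rule dirderiv_sum[OF open_phase_dom sm z finite, symmetric])
  also have "\<dots> = deriv (\<lambda>t. F z) 0"
  proof -
    have "F (z + t *\<^sub>R ((0::real^'n), ((\<chi> i. 1) :: real^'n))) = F z" for t
    proof -
      have "z + t *\<^sub>R ((0::real^'n), ((\<chi> i. 1) :: real^'n)) = (fst z, snd z + t *\<^sub>R ((\<chi> i. 1) :: real^'n))"
        by (simp add: prod_eq_iff)
      then show ?thesis using ti z unfolding transl_inv_def by simp
    qed
    then show ?thesis unfolding s1 dirderiv_def by simp
  qed
  also have "\<dots> = 0" by simp
  finally show ?thesis .
qed

lemma Bk_BB: "Bk Q X H z = BB (Q z) (gr X z) (gr H z)"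
  by (simp add: Bk_def BB_def)

lemma gr_Bk_gen:
  assumes F: "smooth_on phase_dom F" and G: "smooth_on phase_dom G" and z: "z \<in> phase_dom"
    and HP: "\<And>c a b. ((\<lambda>t. P (z + t *\<^sub>R ev c) a b) has_real_derivative dP c a b) (at 0)"
  shows "gr (Bk P F G) z = DDv (P z) dP (gr F z) (H2 F z) (gr G z) (H2 G z)"
  by (rule ext) (simp add: gr_Bk[OF F G z HP] DDv_def)

lemma HD_Pw: assumes z: "z \<in> phase_dom" and n0: "n \<noteq> 0"
  shows "((\<lambda>t. Pi1 (z + t *\<^sub>R u) a b + w * Pi2 g n (z + t *\<^sub>R u) a b) has_real_derivative
     w * dPi2 g n z u a b) (at 0)"
proof -
  have "((\<lambda>t. Pi1 z a b + w * Pi2 g n (z + t *\<^sub>R u) a b) has_real_derivative 0 + w * dPi2 g n z u a b) (at 0)"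
    by (intro DERIV_add DERIV_const DERIV_cmult HD_Pi2[OF z n0])
  moreover have "(\<lambda>t. Pi1 (z + t *\<^sub>R u) a b + w * Pi2 g n (z + t *\<^sub>R u) a b)
      = (\<lambda>t. Pi1 z a b + w * Pi2 g n (z + t *\<^sub>R u) a b)" by (simp add: Pi1_def)
  ultimately show ?thesis by simp
qed

lemma HD_Pi1: "((\<lambda>t. Pi1 (z + t *\<^sub>R u) a b) has_real_derivative 0) (at 0)"
  by (simp add: Pi1_def)

lemma P1_w: "P1 P (\<lambda>c a b. w * dPi2 gm nu z (ev c) a b) f g h = w * T3 (Xc gm nu z P) f g h"
proof -
  have "P1 P (\<lambda>c a b. w * dPi2 gm nu z (ev c) a b) f g h = w * P1 P (\<lambda>c a b. dPi2 gm nu z (ev c) a b) f g h"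
    unfolding P1_def by (simp add: sum_distrib_left algebra_simps)
  then show ?thesis by (simp add: P1_Xc)
qed

lemma P1_zero: "P1 P (\<lambda>c a b. 0) f g h = 0"
  by (simp add: P1_def)

lemma Jc_w: "Jc gm nu z (\<lambda>a b. Pi1 z a b + w * Pi2 gm nu z a b) a b d
   = Jc gm nu z (Pi1 z) a b d + w * Jc gm nu z (Pi2 gm nu z) a b d"
  unfolding Jc_def Xc_def by (simp add: algebra_simps)

lemma T3_lin: "T3 (\<lambda>a b d. X a b d + w * Y a b d) f g h = T3 X f g h + w * T3 Y f g h"
  unfolding T3_def by (simp add: algebra_simps sum.distrib sum_distrib_left)

lemma T3_scale: "T3 (\<lambda>a b d. w * Y a b d) f g h = w * T3 Y f g h"
  unfolding T3_def by (simp add: algebra_simps sum_distrib_left)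

lemma T3_0: "T3 (\<lambda>a b d. 0) f g h = 0"
  unfolding T3_def by simp

lemma Jc_eta: "(\<lambda>a b d. Xc gm nu z P a b d + Xc gm nu z P b d a + Xc gm nu z P d a b) = Jc gm nu z P"
  by (simp add: Jc_def[abs_def])

theorem mainTheorem10:
  fixes \<gamma> \<nu> :: real
    and F G H :: "('n::finite) phase \<Rightarrow> real"
  assumes "CARD('n) \<ge> 2"
    and "\<nu> \<noteq> 0"
    and "\<gamma> \<noteq> 2" and "\<gamma> \<noteq> -2"
    and "smooth_on phase_dom F" and "smooth_on phase_dom G" and "smooth_on phase_dom H"
    and "transl_inv F" and "transl_inv G" and "transl_inv H"
  shows "(\<forall>w::real. \<forall>z\<in>phase_dom.
            brw \<gamma> \<nu> w (brw \<gamma> \<nu> w F G) H z + brw \<gamma> \<nu> w (brw \<gamma> \<nu> w G H) F z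
          + brw \<gamma> \<nu> w (brw \<gamma> \<nu> w H F) G z = 0)
       \<and> (\<forall>z\<in>phase_dom.
            br1 (br2 \<gamma> \<nu> F G) H z + br1 (br2 \<gamma> \<nu> G H) F z + br1 (br2 \<gamma> \<nu> H F) G z
          + br2 \<gamma> \<nu> (br1 F G) H z + br2 \<gamma> \<nu> (br1 G H) F z + br2 \<gamma> \<nu> (br1 H F) G z = 0)"
proof -
  note n0 = assms(2)
  note sF = assms(5) and sG = assms(6) and sH = assms(7)
  have aF: "(\<Sum>i\<in>UNIV. gr F z (True, i)) = 0" if "z \<in> phase_dom" for z
    using annih[OF sF assms(8) that] .
  have aG: "(\<Sum>i\<in>UNIV. gr G z (True, i)) = 0" if "z \<in> phase_dom" for z
    using annih[OF sG assms(9) that] .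
  have aH: "(\<Sum>i\<in>UNIV. gr H z (True, i)) = 0" if "z \<in> phase_dom" for z
    using annih[OF sH assms(10) that] .
  have sym: "\<And>a c. H2 K z c a = H2 K z a c" if "smooth_on phase_dom K" "z \<in> phase_dom" for K z
    using H2_sym[OF open_phase_dom that] by blast
  have part1: "brw \<gamma> \<nu> w (brw \<gamma> \<nu> w F G) H z + brw \<gamma> \<nu> w (brw \<gamma> \<nu> w G H) F z
          + brw \<gamma> \<nu> w (brw \<gamma> \<nu> w H F) G z = 0" if z: "z \<in> phase_dom" for w z
  proof -
    define Pw where "Pw = (\<lambda>(z::'n phase) a b. Pi1 z a b + w * Pi2 \<gamma> \<nu> z a b)"
    define dPw where "dPw = (\<lambda>c a b. w * dPi2 \<gamma> \<nu> z (ev c) a b)"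
    have HP: "\<And>c a b. ((\<lambda>t. Pw (z + t *\<^sub>R ev c) a b) has_real_derivative dPw c a b) (at 0)"
      unfolding Pw_def dPw_def by (rule HD_Pw[OF z n0])
    have anti: "Pw z a b = - Pw z b a" for a b
      unfolding Pw_def using Pi1_anti[of z a b] Pi2_anti[of \<gamma> \<nu> z a b] by simp
    have brw_eq: "brw \<gamma> \<nu> w X Y = Bk Pw X Y" for X Y
      unfolding Pw_def by (rule brw_Bk[OF n0])
    have g1: "gr (Bk Pw X Y) z = DDv (Pw z) dPw (gr X z) (H2 X z) (gr Y z) (H2 Y z)"
      if "smooth_on phase_dom X" "smooth_on phase_dom Y" for X Y
      by (rule gr_Bk_gen[OF that z HP])
    have J: "BB (Pw z) (DDv (Pw z) dPw (gr F z) (H2 F z) (gr G z) (H2 G z)) (gr H z)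
       + BB (Pw z) (DDv (Pw z) dPw (gr G z) (H2 G z) (gr H z) (H2 H z)) (gr F z)
       + BB (Pw z) (DDv (Pw z) dPw (gr H z) (H2 H z) (gr F z) (H2 F z)) (gr G z)
       + BB (Pw z) (DDv (Pw z) dPw (gr F z) (H2 F z) (gr G z) (H2 G z)) (gr H z)
       + BB (Pw z) (DDv (Pw z) dPw (gr G z) (H2 G z) (gr H z) (H2 H z)) (gr F z)
       + BB (Pw z) (DDv (Pw z) dPw (gr H z) (H2 H z) (gr F z) (H2 F z)) (gr G z)
     = P1 (Pw z) dPw (gr F z) (gr G z) (gr H z) + P1 (Pw z) dPw (gr G z) (gr H z) (gr F z)
       + P1 (Pw z) dPw (gr H z) (gr F z) (gr G z) + P1 (Pw z) dPw (gr F z) (gr G z) (gr H z)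
       + P1 (Pw z) dPw (gr G z) (gr H z) (gr F z) + P1 (Pw z) dPw (gr H z) (gr F z) (gr G z)"
      by (rule jacobi_generic[OF anti anti sym[OF sF z] sym[OF sG z] sym[OF sH z]])
    have "P1 (Pw z) dPw (gr F z) (gr G z) (gr H z) + P1 (Pw z) dPw (gr G z) (gr H z) (gr F z)
       + P1 (Pw z) dPw (gr H z) (gr F z) (gr G z)
       = w * T3 (Jc \<gamma> \<nu> z (Pw z)) (gr F z) (gr G z) (gr H z)"
    proof -
      have c: "T3 (Xc \<gamma> \<nu> z (Pw z)) (gr F z) (gr G z) (gr H z) + T3 (Xc \<gamma> \<nu> z (Pw z)) (gr G z) (gr H z) (gr F z)
         + T3 (Xc \<gamma> \<nu> z (Pw z)) (gr H z) (gr F z) (gr G z) = T3 (Jc \<gamma> \<nu> z (Pw z)) (gr F z) (gr G z) (gr H z)"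
        using T3_cyc[of "Xc \<gamma> \<nu> z (Pw z)" "gr F z" "gr G z" "gr H z"] by (simp only: Jc_eta)
      show ?thesis unfolding dPw_def P1_w c[symmetric] by (simp add: algebra_simps)
    qed
    also have "\<dots> = 0"
    proof -
      have "Jc \<gamma> \<nu> z (Pw z) = (\<lambda>a b d. Jc \<gamma> \<nu> z (Pi1 z) a b d + w * Jc \<gamma> \<nu> z (Pi2 \<gamma> \<nu> z) a b d)"
        unfolding Pw_def by (intro ext) (rule Jc_w)
      then show ?thesis
        using T3_zero[OF n0 aF[OF z] aG[OF z] aH[OF z]]
        by (simp add: T3_lin J_mixed T3_0 T3_scale)
    qed
    finally have "P1 (Pw z) dPw (gr F z) (gr G z) (gr H z) + P1 (Pw z) dPw (gr G z) (gr H z) (gr F z)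
       + P1 (Pw z) dPw (gr H z) (gr F z) (gr G z) = 0" .
    with J have "(BB (Pw z) (DDv (Pw z) dPw (gr F z) (H2 F z) (gr G z) (H2 G z)) (gr H z)
       + BB (Pw z) (DDv (Pw z) dPw (gr G z) (H2 G z) (gr H z) (H2 H z)) (gr F z)
       + BB (Pw z) (DDv (Pw z) dPw (gr H z) (H2 H z) (gr F z) (H2 F z)) (gr G z)) = 0"
      by linarith
    then show ?thesis
      unfolding brw_eq Bk_BB g1[OF sF sG] g1[OF sG sH] g1[OF sH sF] by simp
  qed
  have part2: "br1 (br2 \<gamma> \<nu> F G) H z + br1 (br2 \<gamma> \<nu> G H) F z + br1 (br2 \<gamma> \<nu> H F) G z
          + br2 \<gamma> \<nu> (br1 F G) H z + br2 \<gamma> \<nu> (br1 G H) F z + br2 \<gamma> \<nu> (br1 H F) G z = 0"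
    if z: "z \<in> phase_dom" for z
  proof -
    define dP2 where "dP2 = (\<lambda>c a b. dPi2 \<gamma> \<nu> z (ev c) a b)"
    have g2: "gr (Bk (Pi2 \<gamma> \<nu>) X Y) z = DDv (Pi2 \<gamma> \<nu> z) dP2 (gr X z) (H2 X z) (gr Y z) (H2 Y z)"
      if "smooth_on phase_dom X" "smooth_on phase_dom Y" for X Y
      unfolding dP2_def by (rule gr_Bk_gen[OF that z HD_Pi2[OF z n0]])
    have g1: "gr (Bk Pi1 X Y) z = DDv (Pi1 z) (\<lambda>c a b. 0) (gr X z) (H2 X z) (gr Y z) (H2 Y z)"
      if "smooth_on phase_dom X" "smooth_on phase_dom Y" for X Y
      by (rule gr_Bk_gen[OF that z HD_Pi1])
    have J: "BB (Pi1 z) (DDv (Pi2 \<gamma> \<nu> z) dP2 (gr F z) (H2 F z) (gr G z) (H2 G z)) (gr H z)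
       + BB (Pi1 z) (DDv (Pi2 \<gamma> \<nu> z) dP2 (gr G z) (H2 G z) (gr H z) (H2 H z)) (gr F z)
       + BB (Pi1 z) (DDv (Pi2 \<gamma> \<nu> z) dP2 (gr H z) (H2 H z) (gr F z) (H2 F z)) (gr G z)
       + BB (Pi2 \<gamma> \<nu> z) (DDv (Pi1 z) (\<lambda>c a b. 0) (gr F z) (H2 F z) (gr G z) (H2 G z)) (gr H z)
       + BB (Pi2 \<gamma> \<nu> z) (DDv (Pi1 z) (\<lambda>c a b. 0) (gr G z) (H2 G z) (gr H z) (H2 H z)) (gr F z)
       + BB (Pi2 \<gamma> \<nu> z) (DDv (Pi1 z) (\<lambda>c a b. 0) (gr H z) (H2 H z) (gr F z) (H2 F z)) (gr G z)
     = P1 (Pi1 z) dP2 (gr F z) (gr G z) (gr H z) + P1 (Pi1 z) dP2 (gr G z) (gr H z) (gr F z)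
       + P1 (Pi1 z) dP2 (gr H z) (gr F z) (gr G z) + P1 (Pi2 \<gamma> \<nu> z) (\<lambda>c a b. 0) (gr F z) (gr G z) (gr H z)
       + P1 (Pi2 \<gamma> \<nu> z) (\<lambda>c a b. 0) (gr G z) (gr H z) (gr F z) + P1 (Pi2 \<gamma> \<nu> z) (\<lambda>c a b. 0) (gr H z) (gr F z) (gr G z)"
      by (rule jacobi_generic[OF Pi1_anti Pi2_anti sym[OF sF z] sym[OF sG z] sym[OF sH z]])
    have "P1 (Pi1 z) dP2 (gr F z) (gr G z) (gr H z) + P1 (Pi1 z) dP2 (gr G z) (gr H z) (gr F z)
       + P1 (Pi1 z) dP2 (gr H z) (gr F z) (gr G z) = T3 (Jc \<gamma> \<nu> z (Pi1 z)) (gr F z) (gr G z) (gr H z)"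
      unfolding dP2_def P1_Xc
      using T3_cyc[of "Xc \<gamma> \<nu> z (Pi1 z)" "gr F z" "gr G z" "gr H z"]
      by (simp only: Jc_eta)
    also have "\<dots> = 0"
    proof -
      have "Jc \<gamma> \<nu> z (Pi1 z) = (\<lambda>a b d. 0)" by (intro ext) (rule J_mixed)
      then show ?thesis by (simp add: T3_0)
    qed
    finally have "P1 (Pi1 z) dP2 (gr F z) (gr G z) (gr H z) + P1 (Pi1 z) dP2 (gr G z) (gr H z) (gr F z)
       + P1 (Pi1 z) dP2 (gr H z) (gr F z) (gr G z) = 0" .
    with J show ?thesis
      unfolding br1_Bk br2_Bk[OF n0] Bk_BB g1[OF sF sG] g1[OF sG sH] g1[OF sH sF]
        g2[OF sF sG] g2[OF sG sH] g2[OF sH sF]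
      by (simp add: P1_zero)
  qed
  show ?thesis using part1 part2 by blast
qed


end
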